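(* Let $\mathcal{D}$ be a derivation in $\mathbf{Reg}$ (respectively in $\mathbf{Reg}^{+}$) with conclusion $\lambda\vec{x}.M$. Then every path in $\mathcal{D}$ from the conclusion upwards corresponds to a $\to_{\mathrm{reg}}$-rewrite sequence (respectively a $\to_{\mathrm{reg}^+}$-rewrite sequence) starting at $\lambda\vec{x}.M$, where passes over instances of (FIX) correspond to empty steps, passes over instances of $(@)$ to the left premise and to the right premise correspond to $\to_{@_0}$- and $\to_{@_1}$-steps respectively, and passes over instances of $(\lambda)$ and of $(\mathrm{del})$ (respectively $(\mathrm{del}^+)$) correspond to $\to_{\lambda}$-steps and $\to_{\mathrm{compress}}$-steps (respectively $\to_{\mathrm{del}^+}$-steps). The same holds for (finite or infinite) cyclic paths in $\mathcal{D}$ that return, possibly repeatedly, from a marked assumption at the top down to the conclusion of the instance of (FIX) at which that assumption is discharged.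
   Context: Infinite $\lambda$-terms are possibly infinite terms built from variables, abstractions and applications, modulo $\alpha$-equivalence. A prefixed term is $\lambda x_1\ldots x_n.M$ ($n\ge0$, distinct variables, a separate abstraction prefix) with $M$ an infinite $\lambda$-term whose free variables are among the $x_i$. Proof system $\mathbf{Reg}^{+}$ (finite natural-deduction trees of prefixed terms): axiom (nlvar) $\lambda\vec{x}y.y$; $(\lambda)$: from $\lambda\vec{x}y.M_0$ infer $\lambda\vec{x}.\lambda y.M_0$; $(@)$: from $\lambda\vec{x}.M_0$ (left premise) and $\lambda\vec{x}.M_1$ (right premise) infer $\lambda\vec{x}.(M_0\,M_1)$; $(\mathrm{del}^{+})$: from $\lambda x_1\ldots x_{n-1}.M$ infer $\lambda x_1\ldots x_n.M$ if $x_n$ is not free in $M$; (FIX,$u$): from a derivation $\mathcal{D}_0$ of depth $\ge1$ of $\lambda\vec{x}.M$ possibly using open assumptions $[\lambda\vec{x}.M]^u$, infer $\lambda\vec{x}.M$ discharging them. $\mathbf{Reg}$: as $\mathbf{Reg}^{+}$ but with axiom only $\lambda y.y$ and with $(\mathrm{del}^{+})$ replaced by $(\mathrm{del})$: from $\lambda x_1\ldots x_{i-1}x_{i+1}\ldots x_n.M$ infer $\lambda x_1\ldots x_n.M$ if $x_i$ is not free in $M$. Rewrite relations on prefixed terms: $\lambda\vec{x}.\lambda y.M\to_{\lambda}\lambda\vec{x}y.M$; $\lambda\vec{x}.(M_0\,M_1)\to_{@_i}\lambda\vec{x}.M_i$ for $i\in\{0,1\}$; $\lambda x_1\ldots x_n.M\to_{\mathrm{compress}}\lambda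 x_1\ldots x_{i-1}x_{i+1}\ldots x_n.M$ if $x_i$ not free in $M$; $\lambda x_1\ldots x_n.M\to_{\mathrm{del}^+}\lambda x_1\ldots x_{n-1}.M$ if $x_n$ not free in $M$. $\to_{\mathrm{reg}}$ is the union of $\to_\lambda,\to_{@_0},\to_{@_1},\to_{\mathrm{compress}}$; $\to_{\mathrm{reg}^+}$ is the union of $\to_\lambda,\to_{@_0},\to_{@_1},\to_{\mathrm{del}^+}$. *)

theory Defs
  imports Main "HOL-Library.Extended_Nat"
begin

codatatype trm = Var nat | Lam trm | App trm trm

text \<open>Index k occurs free in M (free occurrences lie at finite depth).\<close>
inductive free_in :: "nat \<Rightarrow> trm \<Rightarrow> bool" where
  "free_in k (Var k)"
| "free_in (Suc k) M \<Longrightarrow> free_in k (Lam M)"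
| "free_in k M \<Longrightarrow> free_in k (App M N)"
| "free_in k N \<Longrightarrow> free_in k (App M N)"

definition liftr :: "(nat \<Rightarrow> nat) \<Rightarrow> nat \<Rightarrow> nat" where
  "liftr f j = (case j of 0 \<Rightarrow> 0 | Suc j' \<Rightarrow> Suc (f j'))"

primcorec ren :: "(nat \<Rightarrow> nat) \<Rightarrow> trm \<Rightarrow> trm" where
  "ren f M = (case M of Var j \<Rightarrow> Var (f j)
                       | Lam N \<Rightarrow> Lam (ren (liftr f) N)
                       | App a b \<Rightarrow> App (ren f a) (ren f b))"

text \<open>Renumbering after removing the (not free) index d.\<close>
definition drop_var :: "nat \<Rightarrow> nat \<Rightarrow> nat" where
  "drop_var d j = (if j < d then j else j - 1)"

text \<open>PT n M stands for \<lambda>x1...xn.M, where x_i is de Bruijn index n - i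
  at top level of M (x_n is index 0).\<close>
datatype ptrm = PT nat trm

fun prefixed :: "ptrm \<Rightarrow> bool" where
  "prefixed (PT n M) = (\<forall>k. free_in k M \<longrightarrow> k < n)"

inductive lam_step :: "ptrm \<Rightarrow> ptrm \<Rightarrow> bool" where
  "lam_step (PT n (Lam M)) (PT (Suc n) M)"

inductive app0_step :: "ptrm \<Rightarrow> ptrm \<Rightarrow> bool" where
  "app0_step (PT n (App M0 M1)) (PT n M0)"

inductive app1_step :: "ptrm \<Rightarrow> ptrm \<Rightarrow> bool" where
  "app1_step (PT n (App M0 M1)) (PT n M1)"

text \<open>Remove x_i, i.e. de Bruijn index d = n - i.\<close>
inductive compress_step :: "ptrm \<Rightarrow> ptrm \<Rightarrow> bool" where
  "d < n \<Longrightarrow> \<not> free_in d M \<Longrightarrow> compress_step (PT n M) (PT (n - 1) (ren (drop_var d) M))"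

inductive delp_step :: "ptrm \<Rightarrow> ptrm \<Rightarrow> bool" where
  "\<not> free_in 0 M \<Longrightarrow> delp_step (PT (Suc n) M) (PT n (ren (drop_var 0) M))"

definition reg_step :: "ptrm \<Rightarrow> ptrm \<Rightarrow> bool" where
  "reg_step A B \<longleftrightarrow> lam_step A B \<or> app0_step A B \<or> app1_step A B \<or> compress_step A B"

definition regp_step :: "ptrm \<Rightarrow> ptrm \<Rightarrow> bool" where
  "regp_step A B \<longleftrightarrow> lam_step A B \<or> app0_step A B \<or> app1_step A B \<or> delp_step A B"

datatype sys = Reg | RegPlus

text \<open>Derivation trees; every node carries its conclusion.
  Asm u A is a marked assumption [A]^u; RFix u A D is (FIX,u).\<close>
datatype dtree =
    Axm ptrm
  | Asm nat ptrm
  | RLam ptrm dtree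
  | RApp ptrm dtree dtree
  | RDel ptrm dtree
  | RFix nat ptrm dtree

fun concl :: "dtree \<Rightarrow> ptrm" where
  "concl (Axm A) = A"
| "concl (Asm u A) = A"
| "concl (RLam A D) = A"
| "concl (RApp A D0 D1) = A"
| "concl (RDel A D) = A"
| "concl (RFix u A D) = A"

fun is_leaf :: "dtree \<Rightarrow> bool" where
  "is_leaf (Axm A) = True"
| "is_leaf (Asm u A) = True"
| "is_leaf _ = False"

text \<open>deriv s \<Gamma> D: D is a derivation in system s whose open assumptions
  with marker u are of the form \<Gamma> u.\<close>
inductive deriv :: "sys \<Rightarrow> (nat \<Rightarrow> ptrm option) \<Rightarrow> dtree \<Rightarrow> bool" where
  ax_reg: "deriv Reg \<Gamma> (Axm (PT 1 (Var 0)))"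
| ax_regp: "deriv RegPlus \<Gamma> (Axm (PT (Suc n) (Var 0)))"
| asm_rule: "\<Gamma> u = Some A \<Longrightarrow> prefixed A \<Longrightarrow> deriv s \<Gamma> (Asm u A)"
| lam_rule: "deriv s \<Gamma> D \<Longrightarrow> concl D = PT (Suc n) M \<Longrightarrow> deriv s \<Gamma> (RLam (PT n (Lam M)) D)"
| app_rule: "deriv s \<Gamma> D0 \<Longrightarrow> deriv s \<Gamma> D1 \<Longrightarrow> concl D0 = PT n M0 \<Longrightarrow> concl D1 = PT n M1 \<Longrightarrow>
        deriv s \<Gamma> (RApp (PT n (App M0 M1)) D0 D1)"
| del_rule: "deriv Reg \<Gamma> D \<Longrightarrow> prefixed (PT n M) \<Longrightarrow> d < n \<Longrightarrow> \<not> free_in d M \<Longrightarrow>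
        concl D = PT (n - 1) (ren (drop_var d) M) \<Longrightarrow> deriv Reg \<Gamma> (RDel (PT n M) D)"
| delp_rule: "deriv RegPlus \<Gamma> D \<Longrightarrow> prefixed (PT (Suc n) M) \<Longrightarrow> \<not> free_in 0 M \<Longrightarrow>
        concl D = PT n (ren (drop_var 0) M) \<Longrightarrow> deriv RegPlus \<Gamma> (RDel (PT (Suc n) M) D)"
| fix_rule: "deriv s (\<Gamma>(u \<mapsto> A)) D \<Longrightarrow> concl D = A \<Longrightarrow> \<not> is_leaf D \<Longrightarrow>
        deriv s \<Gamma> (RFix u A D)"

text \<open>Positions: lists of premise indices (0 = left/only premise, 1 = right premise).\<close>
fun subtree :: "dtree \<Rightarrow> nat list \<Rightarrow> dtree option" where
  "subtree D [] = Some D"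
| "subtree (RLam A D) (0 # p) = subtree D p"
| "subtree (RApp A D0 D1) (0 # p) = subtree D0 p"
| "subtree (RApp A D0 D1) (Suc 0 # p) = subtree D1 p"
| "subtree (RDel A D) (0 # p) = subtree D p"
| "subtree (RFix u A D) (0 # p) = subtree D p"
| "subtree _ _ = None"

definition concl_at :: "dtree \<Rightarrow> nat list \<Rightarrow> ptrm" where
  "concl_at D p = concl (the (subtree D p))"

definition fix_at :: "dtree \<Rightarrow> nat list \<Rightarrow> nat \<Rightarrow> bool" where
  "fix_at D q u \<longleftrightarrow> (\<exists>A D'. subtree D q = Some (RFix u A D'))"

text \<open>Back edge from a marked assumption [A]^u at position p to the instance
  of (FIX,u) discharging it (the nearest one below it).\<close>
definition back_edge :: "dtree \<Rightarrow> nat list \<Rightarrow> nat list \<Rightarrow> bool" where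
  "back_edge D p q \<longleftrightarrow> (\<exists>u A k. subtree D p = Some (Asm u A) \<and> k < length p \<and>
      q = take k p \<and> fix_at D q u \<and>
      (\<forall>k'. k < k' \<and> k' < length p \<longrightarrow> \<not> fix_at D (take k' p) u))"

datatype lbl = LEmpty | LLam | LApp0 | LApp1 | LDel

inductive edge :: "dtree \<Rightarrow> nat list \<Rightarrow> lbl \<Rightarrow> nat list \<Rightarrow> bool" where
  "subtree D p = Some (RLam A D1) \<Longrightarrow> edge D p LLam (p @ [0])"
| "subtree D p = Some (RApp A D0 D1) \<Longrightarrow> edge D p LApp0 (p @ [0])"
| "subtree D p = Some (RApp A D0 D1) \<Longrightarrow> edge D p LApp1 (p @ [1])"
| "subtree D p = Some (RDel A D1) \<Longrightarrow> edge D p LDel (p @ [0])"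
| "subtree D p = Some (RFix u A D1) \<Longrightarrow> edge D p LEmpty (p @ [0])"
| "back_edge D p q \<Longrightarrow> edge D p LEmpty q"

fun step_of :: "sys \<Rightarrow> lbl \<Rightarrow> ptrm \<Rightarrow> ptrm \<Rightarrow> bool" where
  "step_of s LEmpty A B = (A = B)"
| "step_of s LLam A B = lam_step A B"
| "step_of s LApp0 A B = app0_step A B"
| "step_of s LApp1 A B = app1_step A B"
| "step_of Reg LDel A B = compress_step A B"
| "step_of RegPlus LDel A B = delp_step A B"

end

theory Submission
  imports Defs
begin

lemma subtree_append: "subtree D p = Some X \<Longrightarrow> subtree D (p @ q) = subtree X q"
  by (induction D p rule: subtree.induct) auto

lemma sub_RLam: "subtree (RLam A D) (a#p) = Some X \<Longrightarrow> a = 0 \<and> subtree D p = Some X"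
  by (cases a) auto
lemma sub_RDel: "subtree (RDel A D) (a#p) = Some X \<Longrightarrow> a = 0 \<and> subtree D p = Some X"
  by (cases a) auto
lemma sub_RFix: "subtree (RFix u A D) (a#p) = Some X \<Longrightarrow> a = 0 \<and> subtree D p = Some X"
  by (cases a) auto
lemma sub_RApp: "subtree (RApp A D0 D1) (a#p) = Some X \<Longrightarrow> (a = 0 \<and> subtree D0 p = Some X) \<or> (a = 1 \<and> subtree D1 p = Some X)"
  apply (cases a)
   apply simp
  apply (rename_tac b, case_tac b)
   apply auto
  done
lemma sub_leaf: "subtree (Axm A) (a#p) = Some X \<Longrightarrow> False" "subtree (Asm u A) (a#p) = Some X \<Longrightarrow> False"
  by auto

lemma subtree_deriv: "deriv s \<Gamma> D \<Longrightarrow> subtree D p = Some X \<Longrightarrow> \<exists>\<Gamma>'. deriv s \<Gamma>' X"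
proof (induction arbitrary: p rule: deriv.induct)
  case (ax_reg \<Gamma>)
  have "deriv Reg \<Gamma> (Axm (PT (Suc 0) (Var 0)))" using deriv.ax_reg by simp
  thus ?case using ax_reg by (cases p) auto
next
  case (lam_rule s \<Gamma> D n M) thus ?case by (cases p) (auto intro: deriv.intros dest: sub_RLam)
next
  case (app_rule s \<Gamma> D0 D1 n M0 M1) thus ?case
    by (cases p) (auto intro: deriv.intros dest!: sub_RApp)
next
  case (del_rule \<Gamma> D n M d) thus ?case
    by (cases p) (auto intro: exI[of _ \<Gamma>] deriv.del_rule[OF del_rule.hyps] dest: sub_RDel)
next
  case (delp_rule \<Gamma> D n M) thus ?case
    by (cases p) (auto intro: exI[of _ \<Gamma>] deriv.delp_rule[OF delp_rule.hyps] dest: sub_RDel)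
next
  case (fix_rule s \<Gamma> u A D) thus ?case by (cases p) (auto intro: deriv.intros dest: sub_RFix)
qed (auto intro: deriv.intros elim: subtree.elims)

lemma fix_at_cons: "(\<And>p. subtree X (c#p) = subtree Y p) \<Longrightarrow> fix_at X (c#q) u = fix_at Y q u"
  unfolding fix_at_def by simp

lemma be_cons:
  assumes ch: "\<And>p. subtree X (c#p) = subtree Y p" and be: "back_edge X (c#p) q"
    and nf: "\<And>u. \<not> fix_at X [] u"
  shows "\<exists>q'. q = c#q' \<and> back_edge Y p q'"
proof -
  from be obtain u A k where 1: "subtree X (c#p) = Some (Asm u A)" "k < length (c#p)"
    "q = take k (c#p)" "fix_at X q u"
    "\<forall>k'. k < k' \<and> k' < length (c#p) \<longrightarrow> \<not> fix_at X (take k' (c#p)) u"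
    unfolding back_edge_def by blast
  then obtain j where kj: "k = Suc j" using nf by (cases k) auto
  have "back_edge Y p (take j p)"
    unfolding back_edge_def
  proof (intro exI conjI allI impI)
    show "subtree Y p = Some (Asm u A)" using 1 ch by simp
    show "j < length p" using 1 kj by simp
    show "fix_at Y (take j p) u" using 1 kj fix_at_cons[OF ch] by simp
    fix k' assume "j < k' \<and> k' < length p"
    thus "\<not> fix_at Y (take k' p) u" using 1(5)[rule_format, of "Suc k'"] kj fix_at_cons[OF ch] by simp
  qed simp
  thus ?thesis using 1 kj by auto
qed

lemma be_cons_fix:
  assumes be: "back_edge (RFix v B Y) (0#p) q"
  shows "(q = [] \<and> (\<exists>A. subtree Y p = Some (Asm v A) \<and> (\<forall>k<length p. \<not> fix_at Y (take k p) v)))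
     \<or> (\<exists>q'. q = 0#q' \<and> back_edge Y p q')"
proof -
  have ch: "\<And>p. subtree (RFix v B Y) (0#p) = subtree Y p" by simp
  from be obtain u A k where 1: "subtree (RFix v B Y) (0#p) = Some (Asm u A)" "k < length (0#p)"
    "q = take k (0#p)" "fix_at (RFix v B Y) q u"
    "\<forall>k'. k < k' \<and> k' < length (0#p) \<longrightarrow> \<not> fix_at (RFix v B Y) (take k' (0#p)) u"
    unfolding back_edge_def by blast
  show ?thesis
  proof (cases k)
    case 0
    then have "u = v" "q = []" using 1 by (auto simp: fix_at_def)
    moreover have "\<forall>k<length p. \<not> fix_at Y (take k p) v"
    proof (intro allI impI)
      fix j assume "j < length p"
      thus "\<not> fix_at Y (take j p) v" using 1(5)[rule_format, of "Suc j"] 0 \<open>u = v\<close> fix_at_cons[OF ch] by simp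
    qed
    ultimately show ?thesis using 1 by auto
  next
    case (Suc j)
    have "back_edge Y p (take j p)"
      unfolding back_edge_def
    proof (intro exI conjI allI impI)
      show "subtree Y p = Some (Asm u A)" using 1 by simp
      show "j < length p" using 1 Suc by simp
      show "fix_at Y (take j p) u" using 1 Suc fix_at_cons[OF ch] by simp
      fix k' assume "j < k' \<and> k' < length p"
      thus "\<not> fix_at Y (take k' p) u" using 1(5)[rule_format, of "Suc k'"] Suc fix_at_cons[OF ch] by simp
    qed simp
    thus ?thesis using 1 Suc by auto
  qed
qed

lemma be_leaf: "back_edge (Axm A) p q \<Longrightarrow> False" "back_edge (Asm u A) p q \<Longrightarrow> False"
  unfolding back_edge_def by (cases p; auto)+

lemma be_root: "back_edge X [] q \<Longrightarrow> False"
  unfolding back_edge_def by auto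

lemma child_transfer:
  assumes ch: "\<And>p. subtree X (c#p) = subtree Y p" and nf: "\<And>u. \<not> fix_at X [] u"
    and IH1: "\<forall>p q. back_edge Y p q \<longrightarrow> concl_at Y p = concl_at Y q"
    and IH2: "\<forall>p u A. subtree Y p = Some (Asm u A) \<and> (\<forall>k<length p. \<not> fix_at Y (take k p) u) \<longrightarrow> \<Gamma> u = Some A"
  shows "back_edge X (c#p) q \<Longrightarrow> concl_at X (c#p) = concl_at X q"
    and "subtree X (c#p) = Some (Asm u A) \<Longrightarrow> (\<forall>k<length (c#p). \<not> fix_at X (take k (c#p)) u) \<Longrightarrow> \<Gamma> u = Some A"
proof -
  assume "back_edge X (c#p) q"
  from be_cons[OF ch this nf] obtain q' where "q = c#q'" "back_edge Y p q'" by blast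
  thus "concl_at X (c#p) = concl_at X q" using IH1 ch by (simp add: concl_at_def)
next
  assume a: "subtree X (c#p) = Some (Asm u A)" "\<forall>k<length (c#p). \<not> fix_at X (take k (c#p)) u"
  have "\<forall>k<length p. \<not> fix_at Y (take k p) u"
  proof (intro allI impI)
    fix k assume "k < length p"
    thus "\<not> fix_at Y (take k p) u" using a(2)[rule_format, of "Suc k"] fix_at_cons[OF ch] by simp
  qed
  thus "\<Gamma> u = Some A" using IH2 a ch by auto
qed

definition INV :: "(nat \<Rightarrow> ptrm option) \<Rightarrow> dtree \<Rightarrow> bool" where
  "INV \<Gamma> D \<longleftrightarrow> (\<forall>p q. back_edge D p q \<longrightarrow> concl_at D p = concl_at D q) \<and>
    (\<forall>p u A. subtree D p = Some (Asm u A) \<and> (\<forall>k<length p. \<not> fix_at D (take k p) u) \<longrightarrow> \<Gamma> u = Some A)"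

lemma be_sub: "back_edge D p q \<Longrightarrow> \<exists>u A. subtree D p = Some (Asm u A)"
  unfolding back_edge_def by blast

lemma generic:
  assumes nf: "\<And>u. \<not> fix_at X [] u" and na: "\<And>u B. X \<noteq> Asm u B"
    and chs: "\<And>a p Z. subtree X (a#p) = Some Z \<Longrightarrow>
       \<exists>Y. (\<forall>p. subtree X (a#p) = subtree Y p) \<and> INV \<Gamma> Y"
  shows "INV \<Gamma> X"
  unfolding INV_def
proof (intro conjI allI impI)
  fix p q assume be: "back_edge X p q"
  show "concl_at X p = concl_at X q"
  proof (cases p)
    case Nil thus ?thesis using be be_root by blast
  next
    case (Cons a p')
    then obtain Y where "\<forall>p. subtree X (a#p) = subtree Y p" "INV \<Gamma> Y"
      using chs be_sub[OF be] by blast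
    thus ?thesis using child_transfer(1)[of X a Y, OF _ nf] be Cons unfolding INV_def by blast
  qed
next
  fix p u A assume h: "subtree X p = Some (Asm u A) \<and> (\<forall>k<length p. \<not> fix_at X (take k p) u)"
  show "\<Gamma> u = Some A"
  proof (cases p)
    case Nil thus ?thesis using h na by auto
  next
    case (Cons a p')
    then obtain Y where "\<forall>p. subtree X (a#p) = subtree Y p" "INV \<Gamma> Y"
      using chs h by blast
    thus ?thesis using child_transfer(2)[of X a Y, OF _ nf] h Cons unfolding INV_def by blast
  qed
qed

lemma inv:
  "deriv s \<Gamma> D \<Longrightarrow> INV \<Gamma> D"
proof (induction rule: deriv.induct)
  case (lam_rule s \<Gamma> D n M)
  show ?case
    by (rule generic) (auto simp: fix_at_def intro!: exI[of _ D] lam_rule.IH dest!: sub_RLam)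
next
  case (app_rule s \<Gamma> D0 D1 n M0 M1)
  show ?case
  proof (rule generic)
    fix a p Z assume "subtree (RApp (PT n (App M0 M1)) D0 D1) (a # p) = Some Z"
    thus "\<exists>Y. (\<forall>p. subtree (RApp (PT n (App M0 M1)) D0 D1) (a # p) = subtree Y p) \<and> INV \<Gamma> Y"
      using app_rule.IH by (auto dest!: sub_RApp)
  qed (auto simp: fix_at_def)
next
  case (del_rule \<Gamma> D n M d)
  show ?case
    by (rule generic) (auto simp: fix_at_def intro!: exI[of _ D] del_rule.IH dest!: sub_RDel)
next
  case (delp_rule \<Gamma> D n M)
  show ?case
    by (rule generic) (auto simp: fix_at_def intro!: exI[of _ D] delp_rule.IH dest!: sub_RDel)
next
  case (fix_rule s \<Gamma> u A D)
  have ch: "\<And>p. subtree (RFix u A D) (0#p) = subtree D p" by simp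
  note IH = fix_rule.IH[unfolded INV_def]
  show ?case unfolding INV_def
  proof (intro conjI allI impI)
    fix p q assume be: "back_edge (RFix u A D) p q"
    show "concl_at (RFix u A D) p = concl_at (RFix u A D) q"
    proof (cases p)
      case Nil thus ?thesis using be be_root by blast
    next
      case (Cons a p')
      then have a0: "a = 0" using be_sub[OF be] sub_RFix by blast
      from be_cons_fix[of u A D p' q] be Cons a0
      consider (r) B where "q = []" "subtree D p' = Some (Asm u B)" "\<forall>k<length p'. \<not> fix_at D (take k p') u"
        | (c) q' where "q = 0#q'" "back_edge D p' q'" by blast
      thus ?thesis
      proof cases
        case r
        then have "(\<Gamma>(u \<mapsto> A)) u = Some B" using IH by blast
        thus ?thesis using r Cons a0 by (simp add: concl_at_def)
      next
        case c thus ?thesis using IH Cons a0 by (simp add: concl_at_def)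
      qed
    qed
  next
    fix p v B assume h: "subtree (RFix u A D) p = Some (Asm v B) \<and> (\<forall>k<length p. \<not> fix_at (RFix u A D) (take k p) v)"
    show "\<Gamma> v = Some B"
    proof (cases p)
      case Nil thus ?thesis using h by auto
    next
      case (Cons a p')
      then have a0: "a = 0" using h sub_RFix by blast
      have "v \<noteq> u" using h[THEN conjunct2, rule_format, of 0] Cons by (auto simp: fix_at_def)
      moreover have "\<forall>k<length p'. \<not> fix_at D (take k p') v"
      proof (intro allI impI)
        fix k assume "k < length p'"
        thus "\<not> fix_at D (take k p') v"
          using h[THEN conjunct2, rule_format, of "Suc k"] fix_at_cons[OF ch] Cons a0 by simp
      qed
      moreover have "subtree D p' = Some (Asm v B)" using h Cons a0 by simp
      ultimately have "(\<Gamma>(u \<mapsto> A)) v = Some B" using IH by blast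
      thus ?thesis using \<open>v \<noteq> u\<close> by simp
    qed
  qed
qed (auto simp: INV_def dest: be_root be_leaf sub_leaf elim: subtree.elims)

lemma edge_ok:
  assumes d: "deriv s \<Gamma> D" and e: "edge D p l q"
  shows "step_of s l (concl_at D p) (concl_at D q) \<and>
     (if s = Reg then (l = LEmpty \<or> reg_step (concl_at D p) (concl_at D q))
            else (l = LEmpty \<or> regp_step (concl_at D p) (concl_at D q)))"
  using e
proof cases
  case (1 A D1)
  then obtain \<Gamma>' where "deriv s \<Gamma>' (RLam A D1)" using subtree_deriv[OF d] by blast
  then show ?thesis using 1 subtree_append[OF 1(3), of "[0]"]
    by (cases rule: deriv.cases) (auto simp: concl_at_def reg_step_def regp_step_def intro: lam_step.intros)
next
  case (2 A D0 D1)
  then obtain \<Gamma>' where "deriv s \<Gamma>' (RApp A D0 D1)" using subtree_deriv[OF d] by blast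
  then show ?thesis using 2 subtree_append[OF 2(3), of "[0]"]
    by (cases rule: deriv.cases) (auto simp: concl_at_def reg_step_def regp_step_def intro: app0_step.intros)
next
  case (3 A D0 D1)
  then obtain \<Gamma>' where "deriv s \<Gamma>' (RApp A D0 D1)" using subtree_deriv[OF d] by blast
  then show ?thesis using 3 subtree_append[OF 3(3), of "[1]"]
    by (cases rule: deriv.cases) (auto simp: concl_at_def reg_step_def regp_step_def intro: app1_step.intros)
next
  case (4 A D1)
  then obtain \<Gamma>' where "deriv s \<Gamma>' (RDel A D1)" using subtree_deriv[OF d] by blast
  then show ?thesis using 4 subtree_append[OF 4(3), of "[0]"]
  proof (cases rule: deriv.cases)
    case (del_rule n M d)
    have "compress_step (PT n M) (PT (n - 1) (ren (drop_var d) M))"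
      using del_rule by (intro compress_step.intros)
    thus ?thesis using del_rule 4 subtree_append[OF 4(3), of "[0]"]
      by (auto simp: concl_at_def reg_step_def)
  next
    case (delp_rule n M)
    have "delp_step (PT (Suc n) M) (PT n (ren (drop_var 0) M))"
      using delp_rule by (intro delp_step.intros)
    thus ?thesis using delp_rule 4 subtree_append[OF 4(3), of "[0]"]
      by (auto simp: concl_at_def regp_step_def)
  qed
next
  case (5 u A D1)
  then obtain \<Gamma>' where "deriv s \<Gamma>' (RFix u A D1)" using subtree_deriv[OF d] by blast
  then show ?thesis using 5 subtree_append[OF 5(3), of "[0]"]
    by (cases rule: deriv.cases) (auto simp: concl_at_def)
next
  case 6
  then show ?thesis using inv[OF d] by (auto simp: INV_def)
qed

theorem mainTheorem2:
  fixes s :: sys and \<Gamma> :: "nat \<Rightarrow> ptrm option" and D :: dtree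
    and ps :: "nat \<Rightarrow> nat list" and ls :: "nat \<Rightarrow> lbl" and len :: enat
  assumes "deriv s \<Gamma> D"
    and "ps 0 = []"
    and "\<forall>i. enat i < len \<longrightarrow> edge D (ps i) (ls i) (ps (Suc i))"
  shows "\<forall>i. enat i < len \<longrightarrow>
           step_of s (ls i) (concl_at D (ps i)) (concl_at D (ps (Suc i))) \<and>
           (if s = Reg then (ls i = LEmpty \<or> reg_step (concl_at D (ps i)) (concl_at D (ps (Suc i))))
            else (ls i = LEmpty \<or> regp_step (concl_at D (ps i)) (concl_at D (ps (Suc i)))))"
  using edge_ok[OF assms(1)] assms(3) by blast

end
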